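(* Let $Q$ be a positive definite $d\times d$ matrix partitioned into blocks $(Q_{ij})_{i,j=1}^s$. The function $$f(w)=\lambda_{\min}\big(\sqrt{Q^{\rm ext}}\,D^{\rm ext}_w\sqrt{Q^{\rm ext}}\big),\quad Q^{\rm ext}=\mathrm{diag}(Q,1),\quad D^{\rm ext}_w=\mathrm{diag}\Big(w_1(Q_{11})^{-1},\dots,w_s(Q_{ss})^{-1},\ 1-\sum_{i=1}^sw_i\Big),$$ is concave on $\Delta_s=\{w\in\mathbb{R}^s: w_i>0,\ 1-w_1-\dots-w_s>0\}$.
   Context: $\sqrt{\cdot}$ denotes the symmetric positive definite square root and $\lambda_{\min}$ the smallest eigenvalue. *)

theory Defs
  imports "HOL-Analysis.Analysis"
begin

definition pos_def_mat :: "real^'n^'n \<Rightarrow> bool" where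
  "pos_def_mat A \<longleftrightarrow> transpose A = A \<and> (\<forall>x. x \<noteq> 0 \<longrightarrow> x \<bullet> (A *v x) > 0)"

definition pd_sqrt :: "real^'n^'n \<Rightarrow> real^'n^'n" where
  "pd_sqrt A = (THE B. pos_def_mat B \<and> B ** B = A)"

definition eigenvalues :: "real^'n^'n \<Rightarrow> real set" where
  "eigenvalues A = {l. \<exists>v. v \<noteq> 0 \<and> A *v v = l *\<^sub>R v}"

definition lambda_min :: "real^'n^'n \<Rightarrow> real" where
  "lambda_min A = Min (eigenvalues A)"

text \<open>Block structure: blk j is the block containing index j. The block-diagonal
  part diag(Q_11,...,Q_ss) of Q; its inverse is diag(Q_11^{-1},...,Q_ss^{-1}).\<close>
definition block_diag_part :: "('n \<Rightarrow> 's) \<Rightarrow> real^'n^'n \<Rightarrow> real^'n^'n" where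
  "block_diag_part blk Q = (\<chi> i j. if blk i = blk j then Q $ i $ j else 0)"

text \<open>Q^ext = diag(Q,1) indexed by 'n option, None being the extra coordinate.\<close>
definition Qext :: "real^'n^'n \<Rightarrow> real^('n option)^('n option)" where
  "Qext Q = (\<chi> i j. case (i, j) of
       (Some a, Some b) \<Rightarrow> Q $ a $ b
     | (None, None) \<Rightarrow> 1
     | _ \<Rightarrow> 0)"

definition Dext :: "('n \<Rightarrow> 's::finite) \<Rightarrow> real^'n^'n \<Rightarrow> real^'s \<Rightarrow> real^('n option)^('n option)" where
  "Dext blk Q w = (\<chi> i j. case (i, j) of
       (Some a, Some b) \<Rightarrow> (if blk a = blk b
                             then w $ (blk a) * matrix_inv (block_diag_part blk Q) $ a $ b
                             else 0)
     | (None, None) \<Rightarrow> 1 - sum (\<lambda>k. w $ k) UNIV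
     | _ \<Rightarrow> 0)"

end

theory Submission
  imports Defs
begin

lemma sym_inner:
  fixes A :: "real^'n^'n"
  assumes "transpose A = A"
  shows "x \<bullet> (A *v y) = (A *v x) \<bullet> y"
  by (metis assms dot_lmul_matrix transpose_matrix_vector)

lemma quad_scale:
  fixes A :: "real^'n^'n"
  shows "(c *\<^sub>R x) \<bullet> (A *v (c *\<^sub>R x)) = c^2 * (x \<bullet> (A *v x))"
  by (simp add: matrix_vector_mult_scaleR power2_eq_square)

lemma psd_kernel:
  fixes A :: "real^'n^'n"
  assumes sym: "transpose A = A" and V: "subspace V" and inv: "\<forall>x\<in>V. A *v x \<in> V"
    and psd: "\<forall>x\<in>V. x \<bullet> (A *v x) \<ge> 0" and u: "u \<in> V" and u0: "u \<bullet> (A *v u) = 0"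
  shows "A *v u = 0"
proof -
  have key: "y \<bullet> (A *v u) = 0" if y: "y \<in> V" for y
  proof (rule ccontr)
    define c where "c = y \<bullet> (A *v u)"
    define a where "a = y \<bullet> (A *v y)"
    assume "y \<bullet> (A *v u) \<noteq> 0"
    hence c0: "c \<noteq> 0" by (simp add: c_def)
    have a0: "a \<ge> 0" using psd y by (simp add: a_def)
    define t where "t = - c / (a + 1)"
    have "u + t *\<^sub>R y \<in> V" using V u y by (simp add: subspace_add subspace_scale)
    hence "0 \<le> (u + t *\<^sub>R y) \<bullet> (A *v (u + t *\<^sub>R y))" using psd by blast
    also have "\<dots> = u \<bullet> (A *v u) + 2 * t * c + t^2 * a"
    proof -
      have "u \<bullet> (A *v y) = c" using sym_inner[OF sym, of u y] by (simp add: c_def inner_commute)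
      thus ?thesis
        by (simp add: matrix_vector_right_distrib matrix_vector_mult_scaleR inner_add_left
            inner_add_right c_def a_def power2_eq_square algebra_simps)
    qed
    also have "\<dots> < 0"
    proof -
      have a1: "a + 1 > 0" using a0 by linarith
      have e1: "t * c = - (c^2) / (a+1)" by (simp add: t_def power2_eq_square)
      have "t^2 = c^2/(a+1)^2" by (simp add: t_def power_divide)
      hence e2: "t^2 * (a+1) = c^2 / (a+1)" using a1 by (simp add: power2_eq_square)
      have "t^2 * a \<le> t^2 * (a+1)" by (simp add: distrib_left)
      moreover have "c^2 / (a+1) > 0" using c0 a1 by simp
      ultimately show ?thesis using u0 e1 e2 by linarith
    qed
    finally show False by simp
  qed
  have "A *v u \<in> V" using inv u by blast
  from key[OF this] show ?thesis by simp
qed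

lemma eig_exists:
  fixes A :: "real^'n^'n"
  assumes sym: "transpose A = A" and V: "subspace V" and inv: "\<forall>x\<in>V. A *v x \<in> V"
    and ne: "V \<noteq> {0}"
  shows "\<exists>u m. u \<in> V \<and> norm u = 1 \<and> A *v u = m *\<^sub>R u \<and>
           (\<forall>x\<in>V. norm x = 1 \<longrightarrow> m \<le> x \<bullet> (A *v x))"
proof -
  define K where "K = V \<inter> sphere 0 1"
  have "compact K" unfolding K_def
    by (metis Int_commute compact_Int_closed compact_sphere closed_subspace V)
  moreover have "K \<noteq> {}"
  proof -
    obtain x where x: "x \<in> V" "x \<noteq> 0" using ne V subspace_0 by blast
    hence "x /\<^sub>R norm x \<in> K" using V by (simp add: K_def subspace_scale)
    thus ?thesis by blast
  qed
  moreover have "continuous_on K (\<lambda>x. x \<bullet> (A *v x))"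
    by (intro continuous_intros)
  ultimately obtain u where uK: "u \<in> K" and umin: "\<forall>y\<in>K. u \<bullet> (A *v u) \<le> y \<bullet> (A *v y)"
    using continuous_attains_inf by blast
  define m where "m = u \<bullet> (A *v u)"
  define B where "B = A - m *\<^sub>R mat 1"
  have Bv: "B *v x = A *v x - m *\<^sub>R x" for x
    by (simp add: B_def matrix_vector_mult_diff_rdistrib flip: scaleR_matrix_vector_assoc)
  have u1: "norm u = 1" "u \<in> V" using uK by (auto simp: K_def)
  have mle: "m \<le> x \<bullet> (A *v x)" if "x \<in> V" "norm x = 1" for x
    using umin that by (auto simp: K_def m_def)
  have symB: "transpose B = B" using sym
    by (simp add: B_def transpose_def vec_eq_iff mat_def)
  have invB: "\<forall>x\<in>V. B *v x \<in> V" using inv V by (simp add: Bv subspace_diff subspace_scale)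
  have psd: "\<forall>x\<in>V. x \<bullet> (B *v x) \<ge> 0"
  proof
    fix x assume x: "x \<in> V"
    show "x \<bullet> (B *v x) \<ge> 0"
    proof (cases "x = 0")
      case False
      define y where "y = x /\<^sub>R norm x"
      have "y \<in> V" "norm y = 1" using x False V by (auto simp: y_def subspace_scale)
      hence "m \<le> y \<bullet> (A *v y)" by (rule mle)
      hence "0 \<le> y \<bullet> (B *v y)" using \<open>norm y = 1\<close>
        by (simp add: Bv inner_diff_right norm_eq_1 [symmetric] dot_square_norm)
      hence "0 \<le> (norm x)^2 * (y \<bullet> (B *v y))" by simp
      also have "\<dots> = x \<bullet> (B *v x)"
        using quad_scale[of "norm x" y B] False by (simp add: y_def)
      finally show ?thesis .
    qed simp
  qed
  have "u \<bullet> (B *v u) = 0" using u1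
    by (simp add: Bv inner_diff_right m_def dot_square_norm)
  from psd_kernel[OF symB V invB psd u1(2) this] have "A *v u = m *\<^sub>R u" by (simp add: Bv)
  thus ?thesis using u1 mle by blast
qed


lemma eig_basis_sub:
  fixes A :: "real^'n^'n"
  assumes sym: "transpose A = A"
  shows "subspace V \<Longrightarrow> (\<forall>x\<in>V. A *v x \<in> V) \<Longrightarrow>
     \<exists>E. E \<subseteq> V \<and> finite E \<and> pairwise orthogonal E \<and>
        (\<forall>e\<in>E. norm e = 1 \<and> (\<exists>l. A *v e = l *\<^sub>R e)) \<and> span E = V"
proof (induction "dim V" arbitrary: V rule: less_induct)
  case less
  show ?case
  proof (cases "V = {0}")
    case True
    thus ?thesis by (intro exI[of _ "{}"]) auto
  next
    case False
    obtain u m where u: "u \<in> V" "norm u = 1" "A *v u = m *\<^sub>R u"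
      using eig_exists[OF sym less.prems False] by blast
    have uu: "u \<bullet> u = 1" using u(2) by (simp add: norm_eq_1)
    define W where "W = {x\<in>V. u \<bullet> x = 0}"
    have sW: "subspace W" using less.prems(1)
      by (auto simp: W_def subspace_def inner_add_right)
    have iW: "\<forall>x\<in>W. A *v x \<in> W"
    proof
      fix x assume x: "x \<in> W"
      have "u \<bullet> (A *v x) = (A *v u) \<bullet> x" by (rule sym_inner[OF sym])
      also have "\<dots> = 0" using u(3) x by (simp add: W_def)
      finally show "A *v x \<in> W" using x less.prems(2) by (simp add: W_def)
    qed
    have "u \<notin> W" using uu by (simp add: W_def)
    moreover have "W \<subseteq> V" by (auto simp: W_def)
    ultimately have "W \<subset> V" using u(1) by blast
    hence "span W \<subset> span V" using sW less.prems(1) by (metis span_eq_iff)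
    hence "dim W < dim V" by (rule dim_psubset)
    from less.hyps[OF this sW iW] obtain EW where EW: "EW \<subseteq> W" "finite EW" "pairwise orthogonal EW"
      "\<forall>e\<in>EW. norm e = 1 \<and> (\<exists>l. A *v e = l *\<^sub>R e)" "span EW = W" by blast
    define E where "E = insert u EW"
    have uEW: "u \<notin> EW" using EW(1) uu by (auto simp: W_def)
    have orth: "orthogonal u e" "orthogonal e u" if "e \<in> EW" for e
      using EW(1) that by (auto simp: W_def orthogonal_def inner_commute)
    have "pairwise orthogonal E" unfolding E_def using EW(3) orth
      by (auto simp: pairwise_insert)
    moreover have "span E = V"
    proof
      show "span E \<subseteq> V" using EW(1) u(1) less.prems(1)
        by (intro span_minimal) (auto simp: E_def W_def)
      show "V \<subseteq> span E"
      proof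
        fix x assume x: "x \<in> V"
        have "x - (u \<bullet> x) *\<^sub>R u \<in> W" using x u(1) uu less.prems(1)
          by (auto simp: W_def inner_diff_right subspace_diff subspace_scale)
        hence "x - (u \<bullet> x) *\<^sub>R u \<in> span E" using EW(5) span_mono[of EW E]
          by (auto simp: E_def)
        moreover have "(u \<bullet> x) *\<^sub>R u \<in> span E" by (simp add: E_def span_base span_scale)
        ultimately have "(x - (u \<bullet> x) *\<^sub>R u) + (u \<bullet> x) *\<^sub>R u \<in> span E" by (rule span_add)
        thus "x \<in> span E" by simp
      qed
    qed
    moreover have "E \<subseteq> V" using EW(1) u(1) by (auto simp: E_def W_def)
    moreover have "finite E" using EW(2) by (simp add: E_def)
    moreover have "\<forall>e\<in>E. norm e = 1 \<and> (\<exists>l. A *v e = l *\<^sub>R e)" using EW(4) u by (auto simp: E_def)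
    ultimately show ?thesis by blast
  qed
qed

lemma eig_basis:
  fixes A :: "real^'n^'n"
  assumes sym: "transpose A = A"
  shows "\<exists>E ev. finite E \<and> pairwise orthogonal E \<and>
        (\<forall>e\<in>E. norm e = 1 \<and> A *v e = ev e *\<^sub>R e) \<and> span E = UNIV"
proof -
  obtain E where E: "finite E" "pairwise orthogonal E"
        "\<forall>e\<in>E. norm e = 1 \<and> (\<exists>l. A *v e = l *\<^sub>R e)" "span E = UNIV"
    using eig_basis_sub[OF sym, of UNIV] by auto
  then obtain ev where "\<forall>e\<in>E. A *v e = ev e *\<^sub>R e" by metis
  thus ?thesis using E by blast
qed

definition ONB :: "(real^'n) set \<Rightarrow> bool" where
  "ONB E \<longleftrightarrow> finite E \<and> pairwise orthogonal E \<and> (\<forall>e\<in>E. norm e = 1) \<and> span E = UNIV"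

lemma ONB_inner: "ONB E \<Longrightarrow> e \<in> E \<Longrightarrow> e' \<in> E \<Longrightarrow> e \<bullet> e' = (if e = e' then 1 else 0)"
  unfolding ONB_def pairwise_def orthogonal_def by (auto simp: norm_eq_1)

lemma ONB_expand: "ONB E \<Longrightarrow> (\<Sum>e\<in>E. (x \<bullet> e) *\<^sub>R e) = x"
  unfolding ONB_def by (intro orthonormal_basis_expand) auto

lemma ONB_zero: assumes "ONB E" "\<forall>e\<in>E. x \<bullet> e = 0" shows "x = 0"
  using ONB_expand[OF assms(1), of x] assms(2) by simp

definition smat :: "(real^'n) set \<Rightarrow> (real^'n \<Rightarrow> real) \<Rightarrow> real^'n^'n" where
  "smat E f = (\<chi> i j. \<Sum>e\<in>E. f e * e$i * e$j)"

lemma smat_vec: "smat E f *v x = (\<Sum>e\<in>E. (f e * (e \<bullet> x)) *\<^sub>R e)"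
proof -
  have "(smat E f *v x) $ i = (\<Sum>e\<in>E. (f e * (e \<bullet> x)) *\<^sub>R e) $ i" for i
  proof -
    have "(smat E f *v x) $ i = (\<Sum>j\<in>UNIV. \<Sum>e\<in>E. f e * e$i * e$j * x$j)"
      by (simp add: smat_def matrix_vector_mult_def sum_distrib_right)
    also have "\<dots> = (\<Sum>e\<in>E. \<Sum>j\<in>UNIV. f e * e$i * (e$j * x$j))"
      by (subst sum.swap) (simp add: mult.assoc)
    also have "\<dots> = (\<Sum>e\<in>E. (f e * (e \<bullet> x)) * e$i)"
      by (simp add: inner_vec_def sum_distrib_left mult_ac)
    finally show ?thesis by (simp add: sum_component)
  qed
  thus ?thesis by (simp add: vec_eq_iff)
qed

lemma smat_sym: "transpose (smat E f) = smat E f"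
  by (simp add: smat_def transpose_def vec_eq_iff mult_ac)

lemma smat_eig: assumes "ONB E" "e' \<in> E" shows "smat E f *v e' = f e' *\<^sub>R e'"
proof -
  have "smat E f *v e' = (\<Sum>e\<in>E. (if e = e' then f e' *\<^sub>R e' else 0))"
    unfolding smat_vec using assms by (intro sum.cong) (auto simp: ONB_inner)
  also have "\<dots> = f e' *\<^sub>R e'" using assms by (simp add: ONB_def)
  finally show ?thesis .
qed

lemma mat_vec_sum: "(A::real^'n^'m) *v (\<Sum>e\<in>E. g e) = (\<Sum>e\<in>E. A *v g e)"
  by (induction E rule: infinite_finite_induct) (auto simp: matrix_vector_right_distrib)

lemma smat_eq:
  fixes A :: "real^'n^'n"
  assumes "ONB E" "\<forall>e\<in>E. A *v e = f e *\<^sub>R e"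
  shows "A = smat E f"
proof -
  have "A *v x = smat E f *v x" for x
  proof -
    have "A *v x = A *v (\<Sum>e\<in>E. (x \<bullet> e) *\<^sub>R e)" using ONB_expand[OF assms(1)] by simp
    also have "\<dots> = (\<Sum>e\<in>E. (f e * (e \<bullet> x)) *\<^sub>R e)"
      using assms(2) by (simp add: mat_vec_sum matrix_vector_mult_scaleR inner_commute mult_ac)
    finally show ?thesis by (simp add: smat_vec)
  qed
  thus ?thesis by (simp add: matrix_eq)
qed

lemma smat_quad: "ONB E \<Longrightarrow> x \<bullet> (smat E f *v x) = (\<Sum>e\<in>E. f e * (e \<bullet> x)^2)"
  by (simp add: smat_vec inner_sum_right power2_eq_square inner_commute mult_ac)

lemma smat_mult: "ONB E \<Longrightarrow> smat E f ** smat E g = smat E (\<lambda>e. f e * g e)"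
  by (rule smat_eq, assumption)
     (simp add: smat_eig matrix_vector_mult_scaleR flip: matrix_vector_mul_assoc)

lemma smat_pd: fixes E :: "(real^'n) set" assumes "ONB E" "\<forall>e\<in>E. f e > 0" shows "pos_def_mat (smat E f)"
  unfolding pos_def_mat_def
proof (intro conjI allI impI smat_sym)
  fix x :: "real^'n" assume x: "x \<noteq> 0"
  then obtain e where e: "e \<in> E" "x \<bullet> e \<noteq> 0" using ONB_zero[OF assms(1)] by blast
  have "0 < f e * (e \<bullet> x)^2" using e assms(2) by (simp add: inner_commute)
  also have "\<dots> \<le> (\<Sum>e\<in>E. f e * (e \<bullet> x)^2)"
  proof (rule member_le_sum)
    show "\<And>y. y \<in> E - {e} \<Longrightarrow> 0 \<le> f y * (y \<bullet> x)^2" using assms(2) by (simp add: less_imp_le)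
  qed (use e assms in \<open>auto simp: ONB_def\<close>)
  finally show "0 < x \<bullet> (smat E f *v x)" by (simp add: smat_quad[OF assms(1)])
qed


lemma ONB_from_basis:
  assumes "finite E" "pairwise orthogonal E" "\<forall>e\<in>E. norm e = 1 \<and> P e" "span E = UNIV"
  shows "ONB E"
  using assms by (simp add: ONB_def)

lemma pd_sqrt_props:
  fixes A :: "real^'n^'n"
  assumes pd: "pos_def_mat A"
  shows "pos_def_mat (pd_sqrt A) \<and> pd_sqrt A ** pd_sqrt A = A"
proof -
  have sym: "transpose A = A" using pd by (simp add: pos_def_mat_def)
  obtain E ev where E: "finite E" "pairwise orthogonal E"
        "\<forall>e\<in>E. norm e = 1 \<and> A *v e = ev e *\<^sub>R e" "span E = UNIV"
    using eig_basis[OF sym] by blast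
  have onb: "ONB E" using E by (simp add: ONB_def)
  have Aeq: "A = smat E ev" using E(3) by (intro smat_eq[OF onb]) auto
  have evpos: "ev e > 0" if e: "e \<in> E" for e
  proof -
    have n: "norm e = 1" "A *v e = ev e *\<^sub>R e" using E(3) e by auto
    hence "e \<noteq> 0" by auto
    hence "0 < e \<bullet> (A *v e)" using pd by (simp add: pos_def_mat_def)
    also have "\<dots> = ev e" using n by (simp add: norm_eq_1)
    finally show ?thesis .
  qed
  define B where "B = smat E (\<lambda>e. sqrt (ev e))"
  have Bpd: "pos_def_mat B" unfolding B_def using evpos by (intro smat_pd[OF onb]) auto
  have BB: "B ** B = A"
  proof -
    have "B ** B = smat E (\<lambda>e. sqrt (ev e) * sqrt (ev e))" unfolding B_def by (rule smat_mult[OF onb])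
    also have "\<dots> = smat E ev" using evpos
      by (simp add: smat_def vec_eq_iff less_imp_le cong: sum.cong)
    finally show ?thesis using Aeq by simp
  qed
  have uniq: "C = B" if C: "pos_def_mat C" "C ** C = A" for C
  proof -
    have "C *v e = sqrt (ev e) *\<^sub>R e" if e: "e \<in> E" for e
    proof (rule ccontr)
      define s where "s = sqrt (ev e)"
      define v where "v = C *v e - s *\<^sub>R e"
      assume "C *v e \<noteq> sqrt (ev e) *\<^sub>R e"
      hence v0: "v \<noteq> 0" by (simp add: v_def s_def)
      have ss: "s * s = ev e" using evpos[OF e] by (simp add: s_def)
      have "C *v v + s *\<^sub>R v = C *v (C *v e) - (s * s) *\<^sub>R e"
        by (simp add: v_def matrix_vector_mult_diff_distrib matrix_vector_mult_scaleR algebra_simps)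
      also have "\<dots> = 0" using C(2) E(3) e ss by (simp add: matrix_vector_mul_assoc)
      finally have "v \<bullet> (C *v v + s *\<^sub>R v) = 0" by simp
      hence "v \<bullet> (C *v v) + s * (v \<bullet> v) = 0" by (simp add: inner_add_right)
      moreover have "v \<bullet> (C *v v) > 0" using C(1) v0 by (simp add: pos_def_mat_def)
      moreover have "s * (v \<bullet> v) \<ge> 0" using evpos[OF e] by (simp add: s_def)
      ultimately show False by linarith
    qed
    thus ?thesis unfolding B_def by (intro smat_eq[OF onb]) auto
  qed
  have "pd_sqrt A = B" unfolding pd_sqrt_def
    by (rule the1_equality) (use Bpd BB uniq in blast)+
  thus ?thesis using Bpd BB by simp
qed

lemma lambda_min_char:
  fixes M :: "real^'n^'n"
  assumes sym: "transpose M = M"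
  shows "(\<forall>x. norm x = 1 \<longrightarrow> lambda_min M \<le> x \<bullet> (M *v x)) \<and>
         (\<exists>u. norm u = 1 \<and> u \<bullet> (M *v u) = lambda_min M)"
proof -
  obtain E ev where E: "finite E" "pairwise orthogonal E"
        "\<forall>e\<in>E. norm e = 1 \<and> M *v e = ev e *\<^sub>R e" "span E = UNIV"
    using eig_basis[OF sym] by blast
  have onb: "ONB E" using E by (simp add: ONB_def)
  obtain u m where u: "norm u = 1" "M *v u = m *\<^sub>R u" "\<forall>x. norm x = 1 \<longrightarrow> m \<le> x \<bullet> (M *v x)"
    using eig_exists[OF sym subspace_UNIV] by auto
  have sub: "eigenvalues M \<subseteq> ev ` E"
  proof
    fix l assume "l \<in> eigenvalues M"
    then obtain v where v: "v \<noteq> 0" "M *v v = l *\<^sub>R v" by (auto simp: eigenvalues_def)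
    then obtain e where e: "e \<in> E" "v \<bullet> e \<noteq> 0" using ONB_zero[OF onb] by blast
    have "l * (e \<bullet> v) = e \<bullet> (M *v v)" using v by simp
    also have "\<dots> = (M *v e) \<bullet> v" by (rule sym_inner[OF sym])
    also have "\<dots> = ev e * (e \<bullet> v)" using E(3) e by simp
    finally have "l = ev e" using e by (simp add: inner_commute)
    thus "l \<in> ev ` E" using e by blast
  qed
  have fin: "finite (eigenvalues M)" using sub E(1) finite_surj by blast
  have "u \<noteq> 0" using u(1) by auto
  hence mem: "m \<in> eigenvalues M" using u(2) by (auto simp: eigenvalues_def)
  have low: "\<forall>l\<in>eigenvalues M. m \<le> l"
  proof
    fix l assume "l \<in> eigenvalues M"
    then obtain v where v: "v \<noteq> 0" "M *v v = l *\<^sub>R v" by (auto simp: eigenvalues_def)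
    define y where "y = v /\<^sub>R norm v"
    have y1: "norm y = 1" using v by (simp add: y_def)
    have "M *v y = l *\<^sub>R y" using v by (simp add: y_def matrix_vector_mult_scaleR)
    hence "y \<bullet> (M *v y) = l" using y1 by (simp add: norm_eq_1)
    thus "m \<le> l" using u(3) y1 by metis
  qed
  have lm: "lambda_min M = m" unfolding lambda_min_def
    by (rule Min_eqI[OF fin]) (use low mem in auto)
  have "u \<bullet> (M *v u) = m" using u by (simp add: norm_eq_1)
  thus ?thesis using u lm by auto
qed


lemma sum_option: "(\<Sum>i\<in>(UNIV::'a::finite option set). f i) = f None + (\<Sum>a\<in>UNIV. f (Some a))"
  by (simp add: UNIV_option_conv sum.reindex)

lemma quad_expand: "x \<bullet> ((A::real^'n^'n) *v y) = (\<Sum>i\<in>UNIV. \<Sum>j\<in>UNIV. x$i * A$i$j * y$j)"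
  by (simp add: inner_vec_def matrix_vector_mult_def sum_distrib_left mult_ac)

lemma pd_nonneg: "pos_def_mat A \<Longrightarrow> 0 \<le> x \<bullet> (A *v x)"
  by (cases "x = 0") (auto simp: pos_def_mat_def intro: less_imp_le)

lemma Qext_pd:
  fixes Q :: "real^'n^'n"
  assumes pd: "pos_def_mat Q"
  shows "pos_def_mat (Qext Q)"
proof -
  have sQ: "Q $ a $ b = Q $ b $ a" for a b
    using pd unfolding pos_def_mat_def by (metis transpose_def vec_lambda_beta)
  have sym: "transpose (Qext Q) = Qext Q"
    by (simp add: Qext_def transpose_def vec_eq_iff sQ split: option.splits)
  have q: "x \<bullet> (Qext Q *v x) = (\<chi> a. x $ Some a) \<bullet> (Q *v (\<chi> a. x $ Some a)) + (x $ None)^2" for x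
    by (simp add: quad_expand sum_option Qext_def power2_eq_square)
  have "0 < x \<bullet> (Qext Q *v x)" if x: "x \<noteq> 0" for x
  proof (cases "(\<chi> a. x $ Some a) = 0")
    case True
    have "x $ None \<noteq> 0"
    proof
      assume "x $ None = 0"
      hence "x $ i = 0" for i using True by (cases i) (auto simp: vec_eq_iff)
      thus False using x by (simp add: vec_eq_iff)
    qed
    thus ?thesis using True by (simp add: q)
  next
    case False
    hence "0 < (\<chi> a. x $ Some a) \<bullet> (Q *v (\<chi> a. x $ Some a))" using pd by (simp add: pos_def_mat_def)
    thus ?thesis by (simp add: q add_pos_nonneg)
  qed
  thus ?thesis using sym by (simp add: pos_def_mat_def)
qed

definition proj_blk :: "('n \<Rightarrow> 's) \<Rightarrow> 's \<Rightarrow> real^'n \<Rightarrow> real^'n" where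
  "proj_blk blk b x = (\<chi> i. if blk i = b then x $ i else 0)"

lemma bdp_pd:
  fixes Q :: "real^'n^'n" and blk :: "'n \<Rightarrow> 's::finite"
  assumes pd: "pos_def_mat Q"
  shows "pos_def_mat (block_diag_part blk Q)"
proof -
  have sQ: "Q $ a $ b = Q $ b $ a" for a b
    using pd unfolding pos_def_mat_def by (metis transpose_def vec_lambda_beta)
  have sym: "transpose (block_diag_part blk Q) = block_diag_part blk Q"
    by (auto simp: block_diag_part_def transpose_def vec_eq_iff sQ)
  have q: "x \<bullet> (block_diag_part blk Q *v x) = (\<Sum>b\<in>UNIV. proj_blk blk b x \<bullet> (Q *v proj_blk blk b x))" for x
  proof -
    have "(\<Sum>b\<in>UNIV. proj_blk blk b x \<bullet> (Q *v proj_blk blk b x)) =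
          (\<Sum>b\<in>UNIV. \<Sum>i\<in>UNIV. \<Sum>j\<in>UNIV. (if blk i = b \<and> blk j = b then x$i * Q$i$j * x$j else 0))"
      unfolding quad_expand proj_blk_def by (intro sum.cong refl) simp
    also have "\<dots> = (\<Sum>i\<in>UNIV. \<Sum>j\<in>UNIV. \<Sum>b\<in>UNIV. (if blk i = b \<and> blk j = b then x$i * Q$i$j * x$j else 0))"
      by (subst sum.swap) (rule sum.cong[OF refl], rule sum.swap)
    also have "\<dots> = (\<Sum>i\<in>UNIV. \<Sum>j\<in>UNIV. (if blk i = blk j then x$i * Q$i$j * x$j else 0))"
    proof (intro sum.cong refl)
      fix i j
      have "(\<Sum>b\<in>UNIV. (if blk i = b \<and> blk j = b then x$i * Q$i$j * x$j else 0)) =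
            (\<Sum>b\<in>UNIV. (if b = blk i then (if blk i = blk j then x$i * Q$i$j * x$j else 0) else 0))"
        by (intro sum.cong) auto
      thus "(\<Sum>b\<in>UNIV. (if blk i = b \<and> blk j = b then x$i * Q$i$j * x$j else 0)) =
            (if blk i = blk j then x$i * Q$i$j * x$j else 0)" by simp
    qed
    also have "\<dots> = x \<bullet> (block_diag_part blk Q *v x)"
      by (simp add: quad_expand block_diag_part_def if_distrib if_distribR cong: if_cong)
    finally show ?thesis by simp
  qed
  have "0 < x \<bullet> (block_diag_part blk Q *v x)" if x: "x \<noteq> 0" for x
  proof -
    obtain i where i: "x $ i \<noteq> 0" using x by (auto simp: vec_eq_iff)
    hence "proj_blk blk (blk i) x \<noteq> 0" by (auto simp: proj_blk_def vec_eq_iff)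
    hence "0 < proj_blk blk (blk i) x \<bullet> (Q *v proj_blk blk (blk i) x)" using pd by (simp add: pos_def_mat_def)
    also have "\<dots> \<le> (\<Sum>b\<in>UNIV. proj_blk blk b x \<bullet> (Q *v proj_blk blk b x))"
      by (rule member_le_sum) (auto intro: pd_nonneg[OF pd])
    finally show ?thesis by (simp add: q)
  qed
  thus ?thesis using sym by (simp add: pos_def_mat_def)
qed

lemma pd_inv_sym:
  fixes A :: "real^'n^'n"
  assumes pd: "pos_def_mat A"
  shows "transpose (matrix_inv A) = matrix_inv A"
proof -
  have inj: "inj ((*v) A)"
  proof (rule injI)
    fix x y assume "A *v x = A *v y"
    hence "A *v (x - y) = 0" by (simp add: matrix_vector_mult_diff_distrib)
    hence "(x - y) \<bullet> (A *v (x - y)) = 0" by simp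
    thus "x = y" using pd unfolding pos_def_mat_def by (metis less_irrefl right_minus_eq)
  qed
  hence "invertible A" using matrix_left_invertible_injective invertible_left_inverse by blast
  hence inv: "A ** matrix_inv A = mat 1 \<and> matrix_inv A ** A = mat 1"
    unfolding matrix_inv_def invertible_def by (rule someI_ex)
  have sym: "transpose A = A" using pd by (simp add: pos_def_mat_def)
  have "transpose (matrix_inv A) ** A = mat 1"
    using inv by (metis matrix_transpose_mul sym transpose_mat)
  hence "transpose (matrix_inv A) = transpose (matrix_inv A) ** (A ** matrix_inv A)" using inv by simp
  also have "\<dots> = matrix_inv A"
    by (simp add: matrix_mul_assoc \<open>transpose (matrix_inv A) ** A = mat 1\<close>)
  finally show ?thesis .
qed

lemma Dext_sym:
  fixes Q :: "real^'n^'n" and blk :: "'n \<Rightarrow> 's::finite"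
  assumes pd: "pos_def_mat Q"
  shows "transpose (Dext blk Q w) = Dext blk Q w"
proof -
  have s: "matrix_inv (block_diag_part blk Q) $ a $ b = matrix_inv (block_diag_part blk Q) $ b $ a" for a b
    using pd_inv_sym[OF bdp_pd[OF pd, of blk]] by (metis transpose_def vec_lambda_beta)
  show ?thesis
    by (auto simp: Dext_def transpose_def vec_eq_iff s split: option.splits)
qed

lemma Dext_affine:
  fixes Q :: "real^'n^'n" and blk :: "'n \<Rightarrow> 's::finite"
  assumes "u + v = 1"
  shows "Dext blk Q (u *\<^sub>R w + v *\<^sub>R z) = u *\<^sub>R Dext blk Q w + v *\<^sub>R Dext blk Q z"
proof -
  have "1 - (\<Sum>k\<in>UNIV. u * w $ k + v * z $ k) = u * (1 - (\<Sum>k\<in>UNIV. w $ k)) + v * (1 - (\<Sum>k\<in>UNIV. z $ k))"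
    using assms by (simp add: sum.distrib sum_distrib_left algebra_simps)
  thus ?thesis
    by (auto simp: Dext_def vec_eq_iff algebra_simps split: option.splits)
qed

lemma pos_comb: "(a::real) > 0 \<Longrightarrow> b > 0 \<Longrightarrow> u \<ge> 0 \<Longrightarrow> v \<ge> 0 \<Longrightarrow> u + v = 1 \<Longrightarrow> u * a + v * b > 0"
proof (cases "u > 0")
  case True
  assume "a > 0" "b > 0" "v \<ge> 0"
  thus ?thesis using True by (simp add: add_pos_nonneg)
next
  case False
  assume "u \<ge> 0" "u + v = 1" "b > 0"
  hence "u = 0" "v = 1" using False by auto
  thus ?thesis using \<open>b > 0\<close> by simp
qed

theorem proposition3:
  fixes Q :: "real^'n^'n" and blk :: "'n \<Rightarrow> 's::finite"
  assumes "pos_def_mat Q"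
    and "surj blk"
  shows "concave_on {w :: real^'s. (\<forall>i. w $ i > 0) \<and> 1 - sum (\<lambda>i. w $ i) UNIV > 0}
           (\<lambda>w. lambda_min (pd_sqrt (Qext Q) ** Dext blk Q w ** pd_sqrt (Qext Q)))"
proof -
  define S where "S = pd_sqrt (Qext Q)"
  define M where "M = (\<lambda>w. S ** Dext blk Q w ** S)"
  define Dom where "Dom = {w :: real^'s. (\<forall>i. w $ i > 0) \<and> 1 - sum (\<lambda>i. w $ i) UNIV > 0}"
  have Spd: "pos_def_mat S" using pd_sqrt_props[OF Qext_pd[OF assms(1)]] by (simp add: S_def)
  have symS: "transpose S = S" using Spd by (simp add: pos_def_mat_def)
  have symM: "transpose (M w) = M w" for w
    by (simp add: M_def matrix_transpose_mul symS Dext_sym[OF assms(1)] matrix_mul_assoc)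
  have quad: "x \<bullet> (M w *v x) = (S *v x) \<bullet> (Dext blk Q w *v (S *v x))" for w x
  proof -
    have "x \<bullet> (M w *v x) = x \<bullet> (S *v (Dext blk Q w *v (S *v x)))"
      by (simp add: M_def matrix_vector_mul_assoc matrix_mul_assoc)
    also have "\<dots> = (S *v x) \<bullet> (Dext blk Q w *v (S *v x))" by (rule sym_inner[OF symS])
    finally show ?thesis .
  qed
  have cvx: "convex Dom"
  proof (rule convexI)
    fix w z :: "real^'s" and u v :: real
    assume a: "w \<in> Dom" "z \<in> Dom" "0 \<le> u" "0 \<le> v" "u + v = 1"
    have c1: "(u *\<^sub>R w + v *\<^sub>R z) $ i > 0" for i
      using a pos_comb[of "w $ i" "z $ i" u v] by (simp add: Dom_def)
    have "1 - (\<Sum>i\<in>UNIV. (u *\<^sub>R w + v *\<^sub>R z) $ i) = u * (1 - (\<Sum>i\<in>UNIV. w $ i)) + v * (1 - (\<Sum>i\<in>UNIV. z $ i))"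
      using a by (simp add: sum.distrib sum_distrib_left algebra_simps)
    hence "1 - (\<Sum>i\<in>UNIV. (u *\<^sub>R w + v *\<^sub>R z) $ i) > 0"
      using a pos_comb[of "1 - (\<Sum>i\<in>UNIV. w $ i)" "1 - (\<Sum>i\<in>UNIV. z $ i)" u v] by (simp add: Dom_def)
    thus "u *\<^sub>R w + v *\<^sub>R z \<in> Dom" using c1 by (simp add: Dom_def)
  qed
  have "concave_on Dom (\<lambda>w. lambda_min (M w))"
    unfolding concave_on_iff
  proof (intro conjI cvx ballI allI impI)
    fix w z and u v :: real
    assume uv: "0 \<le> u" "0 \<le> v" "u + v = 1"
    obtain x where x: "norm x = 1" "x \<bullet> (M (u *\<^sub>R w + v *\<^sub>R z) *v x) = lambda_min (M (u *\<^sub>R w + v *\<^sub>R z))"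
      using lambda_min_char[OF symM] by blast
    have lw: "lambda_min (M w) \<le> x \<bullet> (M w *v x)" and lz: "lambda_min (M z) \<le> x \<bullet> (M z *v x)"
      using lambda_min_char[OF symM] x(1) by blast+
    have "x \<bullet> (M (u *\<^sub>R w + v *\<^sub>R z) *v x) = u * (x \<bullet> (M w *v x)) + v * (x \<bullet> (M z *v x))"
      unfolding quad Dext_affine[OF uv(3)]
      by (simp add: matrix_vector_mult_add_rdistrib inner_add_right flip: scaleR_matrix_vector_assoc)
    moreover have "u * lambda_min (M w) + v * lambda_min (M z) \<le> u * (x \<bullet> (M w *v x)) + v * (x \<bullet> (M z *v x))"
      using lw lz uv by (intro add_mono mult_left_mono) auto
    ultimately show "u * lambda_min (M w) + v * lambda_min (M z) \<le> lambda_min (M (u *\<^sub>R w + v *\<^sub>R z))"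
      using x(2) by simp
  qed
  thus ?thesis by (simp add: M_def S_def Dom_def)
qed

end
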